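(* Let $X$ be a real Banach space, let $V$ be a linear subspace of $X$ and let $x\in S_X$. Then the following are equivalent: (1) For every $v\in V$, $\Vert v+x\Vert=1+\Vert v\Vert$. (2) For every $v^*\in V^*$ there exists $x^*\in X^*$ extending $v^*$ (i.e. $x^*|_V=v^*$) such that $\Vert x^*\Vert=\Vert v^*\Vert$ and $x^*(x)=\Vert v^*\Vert$.
   Context: All Banach spaces are real. $S_X$ denotes the unit sphere of $X$ and $X^*$ its topological dual. *)

theory Defs
  imports "HOL-Analysis.Analysis"
begin

text \<open>A continuous (bounded) linear functional on a linear subspace V, i.e. an element of V^*.
  Its values outside V are irrelevant.\<close>
definition bounded_linear_functional_on :: "'a::real_normed_vector set \<Rightarrow> ('a \<Rightarrow> real) \<Rightarrow> bool" where
  "bounded_linear_functional_on V f \<longleftrightarrow>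
     (\<forall>u\<in>V. \<forall>w\<in>V. f (u + w) = f u + f w) \<and>
     (\<forall>c. \<forall>u\<in>V. f (c *\<^sub>R u) = c * f u) \<and>
     (\<exists>K. \<forall>u\<in>V. \<bar>f u\<bar> \<le> K * norm u)"

definition dual_norm_on :: "'a::real_normed_vector set \<Rightarrow> ('a \<Rightarrow> real) \<Rightarrow> real" where
  "dual_norm_on V f = Sup {\<bar>f u\<bar> | u. u \<in> V \<and> norm u \<le> 1}"

end

theory Submission
  imports Defs "HOL-Analysis.Analysis"
begin


definition fgraph :: "('a \<times> real) set \<Rightarrow> bool" where
  "fgraph G \<longleftrightarrow> (\<forall>a b c. (a,b)\<in>G \<longrightarrow> (a,c)\<in>G \<longrightarrow> b = c)"

lemma subspace_pairD:
  fixes M :: "('a::real_vector \<times> real) set"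
  assumes "subspace M"
  shows "(0,0) \<in> M" "(a,b)\<in>M \<Longrightarrow> (a',b')\<in>M \<Longrightarrow> (a+a',b+b') \<in> M"
    "(a,b)\<in>M \<Longrightarrow> (r *\<^sub>R a, r * b) \<in> M"
proof -
  show "(0,0) \<in> M" using subspace_0[OF assms] by (simp add: zero_prod_def)
  show "(a,b)\<in>M \<Longrightarrow> (a',b')\<in>M \<Longrightarrow> (a+a',b+b') \<in> M"
    using subspace_add[OF assms, of "(a,b)" "(a',b')"] by simp
  show "(a,b)\<in>M \<Longrightarrow> (r *\<^sub>R a, r * b) \<in> M"
    using subspace_scale[OF assms, of "(a,b)" r] by simp
qed

lemma extend_step:
  fixes M :: "('a::real_normed_vector \<times> real) set"
  assumes sub: "subspace M" and fg: "fgraph M" and bd: "\<forall>(a,b)\<in>M. b \<le> N * norm a"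
    and N: "N \<ge> 0" and notin: "\<forall>b. (x0,b) \<notin> M"
  shows "\<exists>M'. subspace M' \<and> fgraph M' \<and> (\<forall>(a,b)\<in>M'. b \<le> N * norm a) \<and> M \<subseteq> M' \<and> M' \<noteq> M"
proof -
  define Sx where "Sx = {b - N * norm (a - x0) | a b. (a,b)\<in>M}"
  define c where "c = Sup Sx"
  have key: "b - N * norm (a - x0) \<le> N * norm (a' + x0) - b'"
    if "(a,b)\<in>M" "(a',b')\<in>M" for a b a' b'
  proof -
    have "(a+a', b+b') \<in> M" using subspace_pairD(2)[OF sub that] .
    hence "b + b' \<le> N * norm (a + a')" using bd by auto
    also have "norm (a + a') \<le> norm (a - x0) + norm (a' + x0)"
      using norm_triangle_ineq[of "a - x0" "a' + x0"] by simp
    hence "N * norm (a + a') \<le> N * (norm (a - x0) + norm (a' + x0))"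
      using N by (simp add: mult_left_mono)
    finally show ?thesis by (simp add: algebra_simps)
  qed
  have Sne: "Sx \<noteq> {}" using subspace_pairD(1)[OF sub] unfolding Sx_def by blast
  have Sbd: "bdd_above Sx" unfolding Sx_def bdd_above_def
    using key[OF _ subspace_pairD(1)[OF sub]] by auto
  have c_lo: "b - N * norm (a - x0) \<le> c" if "(a,b)\<in>M" for a b
    unfolding c_def by (rule cSup_upper[OF _ Sbd]) (use that Sx_def in blast)
  have c_hi: "c \<le> N * norm (a' + x0) - b'" if "(a',b')\<in>M" for a' b'
    unfolding c_def by (rule cSup_least[OF Sne]) (use key that Sx_def in blast)
  define M' where "M' = {(a + t *\<^sub>R x0, b + t * c) | a b t. (a,b)\<in>M}"
  have "subspace M'"
    unfolding subspace_def
  proof (intro conjI ballI allI)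
    show "0 \<in> M'" unfolding M'_def zero_prod_def
      using subspace_pairD(1)[OF sub] by (intro CollectI exI[of _ 0] exI[of _ "0::real"]) force
  next
    fix p q assume "p \<in> M'" "q \<in> M'"
    then obtain a b t a' b' t' where p: "p = (a + t *\<^sub>R x0, b + t * c)" "(a,b)\<in>M"
      and q: "q = (a' + t' *\<^sub>R x0, b' + t' * c)" "(a',b')\<in>M" unfolding M'_def by blast
    have "p + q = ((a+a') + (t+t') *\<^sub>R x0, (b+b') + (t+t') * c)"
      using p q by (simp add: algebra_simps)
    thus "p + q \<in> M'" unfolding M'_def using subspace_pairD(2)[OF sub p(2) q(2)] by blast
  next
    fix r :: real and p assume "p \<in> M'"
    then obtain a b t where p: "p = (a + t *\<^sub>R x0, b + t * c)" "(a,b)\<in>M" unfolding M'_def by blast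
    have "r *\<^sub>R p = (r *\<^sub>R a + (r*t) *\<^sub>R x0, r * b + (r*t) * c)"
      using p by (simp add: algebra_simps)
    thus "r *\<^sub>R p \<in> M'" unfolding M'_def using subspace_pairD(3)[OF sub p(2)] by blast
  qed
  moreover have "fgraph M'"
    unfolding fgraph_def
  proof (intro allI impI)
    fix y u w assume "(y,u)\<in>M'" "(y,w)\<in>M'"
    then obtain a b t a' b' t' where p: "y = a + t *\<^sub>R x0" "u = b + t * c" "(a,b)\<in>M"
      and q: "y = a' + t' *\<^sub>R x0" "w = b' + t' * c" "(a',b')\<in>M" unfolding M'_def by blast
    have tt: "t = t'"
    proof (rule ccontr)
      assume ne: "t \<noteq> t'"
      have "(a + (-1) *\<^sub>R a', b + (-1) * b') \<in> M"
        using subspace_pairD(2)[OF sub p(3) subspace_pairD(3)[OF sub q(3)]] .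
      hence "(a - a', b - b') \<in> M" by simp
      hence "((1/(t'-t)) *\<^sub>R (a - a'), (1/(t'-t)) * (b - b')) \<in> M"
        by (rule subspace_pairD(3)[OF sub])
      moreover have "(1/(t'-t)) *\<^sub>R (a - a') = x0"
      proof -
        have "a - a' = (t' - t) *\<^sub>R x0" using p(1) q(1) by (simp add: algebra_simps)
        thus ?thesis using ne by simp
      qed
      ultimately have "(x0, (1/(t'-t)) * (b - b')) \<in> M" by simp
      thus False using notin by blast
    qed
    hence "a = a'" using p(1) q(1) by simp
    hence "b = b'" using fg p(3) q(3) unfolding fgraph_def by blast
    thus "u = w" using p q tt by simp
  qed
  moreover have "\<forall>(y,u)\<in>M'. u \<le> N * norm y"
  proof (intro ballI, clarify)
    fix y u assume "(y,u)\<in>M'"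
    then obtain a b t where p: "y = a + t *\<^sub>R x0" "u = b + t * c" "(a,b)\<in>M"
      unfolding M'_def by blast
    consider "t = 0" | "t > 0" | "t < 0" by linarith
    thus "u \<le> N * norm y"
    proof cases
      case 1 thus ?thesis using p bd by auto
    next
      case 2
      have "((1/t) *\<^sub>R a, (1/t) * b) \<in> M" using subspace_pairD(3)[OF sub p(3)] .
      from c_hi[OF this] have "t * c \<le> t * (N * norm ((1/t) *\<^sub>R a + x0) - (1/t) * b)"
        using 2 by (simp add: mult_left_mono)
      also have "\<dots> = N * (t * norm ((1/t) *\<^sub>R a + x0)) - b" using 2 by (simp add: algebra_simps)
      also have "t * norm ((1/t) *\<^sub>R a + x0) = norm (a + t *\<^sub>R x0)"
      proof -
        have "t * norm ((1/t) *\<^sub>R a + x0) = norm (t *\<^sub>R ((1/t) *\<^sub>R a + x0))" using 2 by simp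
        also have "t *\<^sub>R ((1/t) *\<^sub>R a + x0) = a + t *\<^sub>R x0" using 2 by (simp add: algebra_simps)
        finally show ?thesis .
      qed
      finally show ?thesis using p by simp
    next
      case 3
      define s where "s = -t"
      have s: "s > 0" using 3 s_def by simp
      have "((1/s) *\<^sub>R a, (1/s) * b) \<in> M" using subspace_pairD(3)[OF sub p(3)] .
      from c_lo[OF this] have "s * ((1/s) * b - N * norm ((1/s) *\<^sub>R a - x0)) \<le> s * c"
        using s by (simp add: mult_left_mono)
      hence "b - N * (s * norm ((1/s) *\<^sub>R a - x0)) \<le> s * c" using s by (simp add: algebra_simps)
      moreover have "s * norm ((1/s) *\<^sub>R a - x0) = norm (a + t *\<^sub>R x0)"
      proof -
        have "s * norm ((1/s) *\<^sub>R a - x0) = norm (s *\<^sub>R ((1/s) *\<^sub>R a - x0))" using s by simp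
        also have "s *\<^sub>R ((1/s) *\<^sub>R a - x0) = a + t *\<^sub>R x0" using s s_def by (simp add: algebra_simps)
        finally show ?thesis .
      qed
      ultimately have "b - N * norm (a + t *\<^sub>R x0) \<le> s * c" by metis
      thus ?thesis using p s_def by simp
    qed
  qed
  moreover have "M \<subseteq> M'"
  proof
    fix p assume "p \<in> M"
    then obtain a b where "p = (a,b)" "(a,b)\<in>M" by (cases p) auto
    thus "p \<in> M'" unfolding M'_def by (intro CollectI exI[of _ a] exI[of _ b] exI[of _ "0::real"]) simp
  qed
  moreover have "(x0, c) \<in> M'" unfolding M'_def using subspace_pairD(1)[OF sub]
    by (intro CollectI exI[of _ 0] exI[of _ "0::real"] exI[of _ "1::real"]) simp
  hence "M' \<noteq> M" using notin by blast
  ultimately show ?thesis by blast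
qed



lemma HB_graph:
  fixes G0 :: "('a::real_normed_vector \<times> real) set"
  assumes G0: "subspace G0" "fgraph G0" "\<forall>(a,b)\<in>G0. b \<le> N * norm a" and N: "N \<ge> 0"
  shows "\<exists>g. bounded_linear g \<and> (\<forall>(a,b)\<in>G0. g a = b) \<and> (\<forall>y. \<bar>g y\<bar> \<le> N * norm y)"
proof -
  define A where "A = {G. subspace G \<and> G0 \<subseteq> G \<and> fgraph G \<and> (\<forall>(a,b)\<in>G. b \<le> N * norm a)}"
  have "\<exists>M\<in>A. \<forall>X\<in>A. M \<subseteq> X \<longrightarrow> X = M"
  proof (rule subset_Zorn_nonempty)
    show "A \<noteq> {}" using G0 unfolding A_def by blast
  next
    fix C assume Cne: "C \<noteq> {}" and ch: "subset.chain A C"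
    hence CA: "C \<subseteq> A" and tot: "\<forall>X\<in>C. \<forall>Y\<in>C. X \<subseteq> Y \<or> Y \<subseteq> X"
      by (auto simp: subset_chain_def)
    have sub: "subspace X" "G0 \<subseteq> X" "fgraph X" "\<forall>(a,b)\<in>X. b \<le> N * norm a" if "X \<in> C" for X
      using CA that unfolding A_def by auto
    have two: "\<exists>Z\<in>C. p \<in> Z \<and> q \<in> Z" if "p \<in> \<Union>C" "q \<in> \<Union>C" for p q
      using that tot by blast
    have "subspace (\<Union>C)" unfolding subspace_def
    proof (intro conjI ballI allI)
      obtain X where "X \<in> C" using Cne by blast
      thus "0 \<in> \<Union>C" using sub(1) subspace_0 by blast
    next
      fix p q assume "p \<in> \<Union>C" "q \<in> \<Union>C"
      then obtain Z where "Z \<in> C" "p \<in> Z" "q \<in> Z" using two by blast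
      thus "p + q \<in> \<Union>C" using sub(1) subspace_add by blast
    next
      fix r :: real and p assume "p \<in> \<Union>C"
      then obtain Z where "Z \<in> C" "p \<in> Z" by blast
      thus "r *\<^sub>R p \<in> \<Union>C" using sub(1) subspace_scale by blast
    qed
    moreover have "G0 \<subseteq> \<Union>C" using Cne sub(2) by blast
    moreover have "fgraph (\<Union>C)" unfolding fgraph_def
    proof (intro allI impI)
      fix a b c assume "(a,b) \<in> \<Union>C" "(a,c) \<in> \<Union>C"
      then obtain Z where "Z \<in> C" "(a,b) \<in> Z" "(a,c) \<in> Z" using two by blast
      thus "b = c" using sub(3) unfolding fgraph_def by blast
    qed
    moreover have "\<forall>(a,b)\<in>\<Union>C. b \<le> N * norm a" using sub(4) by blast
    ultimately show "\<Union>C \<in> A" unfolding A_def by blast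
  qed
  then obtain M where MA: "M \<in> A" and max: "\<forall>X\<in>A. M \<subseteq> X \<longrightarrow> X = M" by blast
  have Ms: "subspace M" "G0 \<subseteq> M" "fgraph M" "\<forall>(a,b)\<in>M. b \<le> N * norm a"
    using MA unfolding A_def by auto
  have full: "\<exists>b. (y,b) \<in> M" for y
  proof (rule ccontr)
    assume "\<nexists>b. (y, b) \<in> M"
    then obtain M' where "subspace M'" "fgraph M'" "\<forall>(a,b)\<in>M'. b \<le> N * norm a" "M \<subseteq> M'" "M' \<noteq> M"
      using extend_step[OF Ms(1,3,4) N] by blast
    moreover hence "M' \<in> A" using Ms(2) unfolding A_def by blast
    ultimately show False using max by blast
  qed
  define g where "g y = (SOME b. (y,b) \<in> M)" for y
  have gM: "(y, g y) \<in> M" for y unfolding g_def using full someI_ex by metis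
  have geq: "g y = b" if "(y,b) \<in> M" for y b using gM that Ms(3) unfolding fgraph_def by blast
  have gadd: "g (y + z) = g y + g z" for y z
    using geq subspace_pairD(2)[OF Ms(1) gM gM] by blast
  have gscale: "g (r *\<^sub>R y) = r * g y" for r y
    using geq subspace_pairD(3)[OF Ms(1) gM] by blast
  have gle: "g y \<le> N * norm y" for y using gM Ms(4) by blast
  have gabs: "\<bar>g y\<bar> \<le> N * norm y" for y
  proof -
    have "- g y = g ((-1) *\<^sub>R y)" using gscale[of "-1" y] by simp
    also have "\<dots> \<le> N * norm y" using gle[of "(-1) *\<^sub>R y"] by simp
    finally show ?thesis using gle[of y] by linarith
  qed
  have "bounded_linear g"
    by (rule bounded_linear_intro[where K=N]) (use gadd gscale gabs in \<open>auto simp: mult.commute\<close>)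
  moreover have "\<forall>(a,b)\<in>G0. g a = b" using geq Ms(2) by blast
  ultimately show ?thesis using gabs by blast
qed



lemma dual_bound:
  assumes "subspace V" "bounded_linear_functional_on V f"
  shows "0 \<le> dual_norm_on V f" "\<forall>u\<in>V. \<bar>f u\<bar> \<le> dual_norm_on V f * norm u" "f 0 = 0"
proof -
  obtain K where K: "\<forall>u\<in>V. \<bar>f u\<bar> \<le> K * norm u" using assms(2) unfolding bounded_linear_functional_on_def by blast
  have hom: "\<forall>c. \<forall>u\<in>V. f (c *\<^sub>R u) = c * f u" using assms(2) unfolding bounded_linear_functional_on_def by blast
  have V0: "0 \<in> V" using assms(1) subspace_0 by blast
  show f0: "f 0 = 0" using hom V0 by (metis mult_zero_left scaleR_zero_left)
  define S where "S = {\<bar>f u\<bar> | u. u \<in> V \<and> norm u \<le> 1}"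
  have Sne: "S \<noteq> {}" using V0 S_def by auto
  have Sbd: "bdd_above S" unfolding bdd_above_def S_def
  proof (intro exI[of _ "\<bar>K\<bar>"] ballI, clarify)
    fix u assume u: "u \<in> V" "norm u \<le> 1"
    have "K * norm u \<le> \<bar>K\<bar> * norm u" by (rule mult_right_mono) auto
    also have "\<dots> \<le> \<bar>K\<bar> * 1" using u(2) by (rule mult_left_mono) auto
    finally have "K * norm u \<le> \<bar>K\<bar> * 1" .
    thus "\<bar>f u\<bar> \<le> \<bar>K\<bar>" using K u by fastforce
  qed
  have dn: "dual_norm_on V f = Sup S" unfolding dual_norm_on_def S_def ..
  show "0 \<le> dual_norm_on V f" unfolding dn
    using cSup_upper[OF _ Sbd, of 0] f0 V0 S_def by fastforce
  show "\<forall>u\<in>V. \<bar>f u\<bar> \<le> dual_norm_on V f * norm u"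
  proof
    fix u assume u: "u \<in> V"
    show "\<bar>f u\<bar> \<le> dual_norm_on V f * norm u"
    proof (cases "u = 0")
      case True thus ?thesis using f0 by simp
    next
      case False
      hence np: "norm u > 0" by simp
      have "(1/norm u) *\<^sub>R u \<in> V" using assms(1) u subspace_scale by blast
      moreover have "norm ((1/norm u) *\<^sub>R u) \<le> 1" using np by simp
      ultimately have "\<bar>f ((1/norm u) *\<^sub>R u)\<bar> \<in> S" unfolding S_def by blast
      hence "\<bar>f ((1/norm u) *\<^sub>R u)\<bar> \<le> Sup S" using cSup_upper[OF _ Sbd] by blast
      moreover have "\<bar>f ((1/norm u) *\<^sub>R u)\<bar> = \<bar>f u\<bar> / norm u" using hom u np by simp
      ultimately have "\<bar>f u\<bar> / norm u \<le> dual_norm_on V f" using dn by simp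
      thus ?thesis using np by (simp add: divide_le_eq)
    qed
  qed
qed

theorem mainTheorem1:
  fixes V :: "'a::banach set" and x :: 'a
  assumes "subspace V" and "norm x = 1"
  shows "(\<forall>v\<in>V. norm (v + x) = 1 + norm v) \<longleftrightarrow>
         (\<forall>f. bounded_linear_functional_on V f \<longrightarrow>
            (\<exists>g::'a \<Rightarrow> real. bounded_linear g \<and> (\<forall>v\<in>V. g v = f v) \<and>
                 onorm g = dual_norm_on V f \<and> g x = dual_norm_on V f))"
proof
  assume H1: "\<forall>v\<in>V. norm (v + x) = 1 + norm v"
  show "\<forall>f. bounded_linear_functional_on V f \<longrightarrow>
            (\<exists>g::'a \<Rightarrow> real. bounded_linear g \<and> (\<forall>v\<in>V. g v = f v) \<and>
                 onorm g = dual_norm_on V f \<and> g x = dual_norm_on V f)"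
  proof (intro allI impI)
    fix f assume bl: "bounded_linear_functional_on V f"
    define N where "N = dual_norm_on V f"
    have N0: "N \<ge> 0" and fb: "\<forall>u\<in>V. \<bar>f u\<bar> \<le> N * norm u" and f0: "f 0 = 0"
      using dual_bound[OF assms(1) bl] N_def by auto
    have fadd: "\<forall>u\<in>V. \<forall>w\<in>V. f (u + w) = f u + f w" and fhom: "\<forall>c. \<forall>u\<in>V. f (c *\<^sub>R u) = c * f u"
      using bl unfolding bounded_linear_functional_on_def by auto
    have xV: "x \<notin> V"
    proof
      assume "x \<in> V"
      hence "-x \<in> V" using assms(1) subspace_neg by blast
      thus False using H1 assms(2) by fastforce
    qed
    define G0 where "G0 = {(u + t *\<^sub>R x, f u + t * N) | u t. u \<in> V}"
    have "subspace G0" unfolding subspace_def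
    proof (intro conjI ballI allI)
      show "0 \<in> G0" unfolding G0_def zero_prod_def using f0 subspace_0[OF assms(1)]
        by (intro CollectI exI[of _ 0] exI[of _ "0::real"]) simp
    next
      fix p q assume "p \<in> G0" "q \<in> G0"
      then obtain u t u' t' where p: "p = (u + t *\<^sub>R x, f u + t * N)" "u \<in> V"
        and q: "q = (u' + t' *\<^sub>R x, f u' + t' * N)" "u' \<in> V" unfolding G0_def by blast
      have "p + q = ((u+u') + (t+t') *\<^sub>R x, f (u+u') + (t+t') * N)"
        using p q fadd by (simp add: algebra_simps)
      moreover have "u + u' \<in> V" using p q assms(1) subspace_add by blast
      ultimately show "p + q \<in> G0" unfolding G0_def by blast
    next
      fix r :: real and p assume "p \<in> G0"
      then obtain u t where p: "p = (u + t *\<^sub>R x, f u + t * N)" "u \<in> V" unfolding G0_def by blast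
      have "r *\<^sub>R p = (r *\<^sub>R u + (r*t) *\<^sub>R x, f (r *\<^sub>R u) + (r*t) * N)"
        using p fhom by (simp add: algebra_simps)
      moreover have "r *\<^sub>R u \<in> V" using p assms(1) subspace_scale by blast
      ultimately show "r *\<^sub>R p \<in> G0" unfolding G0_def by blast
    qed
    moreover have "fgraph G0" unfolding fgraph_def
    proof (intro allI impI)
      fix y b c assume "(y,b) \<in> G0" "(y,c) \<in> G0"
      then obtain u t u' t' where p: "y = u + t *\<^sub>R x" "b = f u + t * N" "u \<in> V"
        and q: "y = u' + t' *\<^sub>R x" "c = f u' + t' * N" "u' \<in> V" unfolding G0_def by blast
      have tt: "t = t'"
      proof (rule ccontr)
        assume ne: "t \<noteq> t'"
        have "u - u' = (t' - t) *\<^sub>R x" using p(1) q(1) by (simp add: algebra_simps)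
        hence "x = (1/(t'-t)) *\<^sub>R (u - u')" using ne by simp
        moreover have "u - u' \<in> V" using p(3) q(3) assms(1) subspace_diff by blast
        ultimately have "x \<in> V" using assms(1) subspace_scale by metis
        thus False using xV by blast
      qed
      thus "b = c" using p q by simp
    qed
    moreover have "\<forall>(y,b)\<in>G0. b \<le> N * norm y"
    proof (intro ballI, clarify)
      fix y b assume "(y,b)\<in>G0"
      then obtain u t where p: "y = u + t *\<^sub>R x" "b = f u + t * N" "u \<in> V" unfolding G0_def by blast
      show "b \<le> N * norm y"
      proof (cases "t = 0")
        case True thus ?thesis using p fb by fastforce
      next
        case False
        have "(1/t) *\<^sub>R u \<in> V" using p(3) assms(1) subspace_scale by blast
        hence "norm ((1/t) *\<^sub>R u + x) = 1 + norm ((1/t) *\<^sub>R u)" using H1 by blast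
        hence "\<bar>t\<bar> * norm ((1/t) *\<^sub>R u + x) = \<bar>t\<bar> + norm u" using False
          by (simp add: algebra_simps)
        moreover have "\<bar>t\<bar> * norm ((1/t) *\<^sub>R u + x) = norm (t *\<^sub>R ((1/t) *\<^sub>R u + x))" by simp
        moreover have "t *\<^sub>R ((1/t) *\<^sub>R u + x) = u + t *\<^sub>R x" using False by (simp add: algebra_simps)
        ultimately have ny: "norm y = \<bar>t\<bar> + norm u" using p(1) by simp
        have t1: "t * N \<le> \<bar>t\<bar> * N" using N0 by (rule mult_right_mono[OF abs_ge_self])
        have t2: "f u \<le> N * norm u" using fb p(3) by fastforce
        have "b \<le> N * norm u + \<bar>t\<bar> * N" using p(2) t1 t2 by linarith
        thus ?thesis using ny by (simp add: algebra_simps)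
      qed
    qed
    ultimately obtain g where g: "bounded_linear g" "\<forall>(a,b)\<in>G0. g a = b" "\<forall>y. \<bar>g y\<bar> \<le> N * norm y"
      using HB_graph[OF _ _ _ N0] by blast
    have gf: "\<forall>v\<in>V. g v = f v"
    proof
      fix v assume "v \<in> V"
      hence "(v + 0 *\<^sub>R x, f v + 0 * N) \<in> G0" unfolding G0_def by blast
      thus "g v = f v" using g(2) by auto
    qed
    have gx: "g x = N"
    proof -
      have "(0 + 1 *\<^sub>R x, f 0 + 1 * N) \<in> G0" unfolding G0_def using subspace_0[OF assms(1)] by blast
      thus ?thesis using g(2) f0 by auto
    qed
    have "onorm g \<le> N" by (rule onorm_bound[OF N0]) (use g(3) in simp)
    moreover have "N \<le> onorm g" using onorm[OF g(1), of x] gx assms(2) by simp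
    ultimately have "onorm g = N" by simp
    thus "\<exists>g::'a \<Rightarrow> real. bounded_linear g \<and> (\<forall>v\<in>V. g v = f v) \<and>
                 onorm g = dual_norm_on V f \<and> g x = dual_norm_on V f"
      using g(1) gf gx N_def by (intro exI[of _ g] conjI) auto
  qed
next
  assume H2: "\<forall>f. bounded_linear_functional_on V f \<longrightarrow>
            (\<exists>g::'a \<Rightarrow> real. bounded_linear g \<and> (\<forall>v\<in>V. g v = f v) \<and>
                 onorm g = dual_norm_on V f \<and> g x = dual_norm_on V f)"
  show "\<forall>v\<in>V. norm (v + x) = 1 + norm v"
  proof
    fix v assume vV: "v \<in> V"
    show "norm (v + x) = 1 + norm v"
    proof (cases "v = 0")
      case True thus ?thesis using assms(2) by simp
    next
      case vne: False
      define G0 where "G0 = {(t *\<^sub>R v, t * norm v) | t. True}"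
      have "subspace G0" unfolding subspace_def
      proof (intro conjI ballI allI)
        show "0 \<in> G0" unfolding G0_def zero_prod_def by (intro CollectI exI[of _ "0::real"]) simp
      next
        fix p q assume "p \<in> G0" "q \<in> G0"
        then obtain t t' where "p = (t *\<^sub>R v, t * norm v)" "q = (t' *\<^sub>R v, t' * norm v)"
          unfolding G0_def by blast
        hence "p + q = ((t+t') *\<^sub>R v, (t+t') * norm v)" by (simp add: algebra_simps)
        thus "p + q \<in> G0" unfolding G0_def by blast
      next
        fix r :: real and p assume "p \<in> G0"
        then obtain t where "p = (t *\<^sub>R v, t * norm v)" unfolding G0_def by blast
        hence "r *\<^sub>R p = ((r*t) *\<^sub>R v, (r*t) * norm v)" by simp
        thus "r *\<^sub>R p \<in> G0" unfolding G0_def by blast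
      qed
      moreover have "fgraph G0" unfolding fgraph_def
      proof (intro allI impI)
        fix y b c assume "(y,b) \<in> G0" "(y,c) \<in> G0"
        then obtain t t' where p: "y = t *\<^sub>R v" "b = t * norm v" and q: "y = t' *\<^sub>R v" "c = t' * norm v"
          unfolding G0_def by blast
        have "(t - t') *\<^sub>R v = 0" using p(1) q(1) by (auto simp add: scaleR_diff_left)
        hence "t = t'" using vne by simp
        thus "b = c" using p q by simp
      qed
      moreover have "\<forall>(y,b)\<in>G0. b \<le> 1 * norm y"
        unfolding G0_def by (auto intro!: mult_right_mono)
      ultimately obtain g where g: "bounded_linear g" "\<forall>(a,b)\<in>G0. g a = b" "\<forall>y. \<bar>g y\<bar> \<le> 1 * norm y"
        using HB_graph[of G0 1] by auto
      have gv: "g v = norm v" proof -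
        have "(1 *\<^sub>R v, 1 * norm v) \<in> G0" unfolding G0_def by blast
        thus ?thesis using g(2) by auto
      qed
      have blf: "bounded_linear_functional_on V g"
        unfolding bounded_linear_functional_on_def
        using g(1) g(3) linear_add[OF bounded_linear.linear[OF g(1)]]
          linear_scale[OF bounded_linear.linear[OF g(1)]] by (auto intro!: exI[of _ 1])
      have dn: "dual_norm_on V g = 1"
      proof -
        define S where "S = {\<bar>g u\<bar> | u. u \<in> V \<and> norm u \<le> 1}"
        have Sne: "S \<noteq> {}" using subspace_0[OF assms(1)] S_def by auto
        have Sle: "\<forall>s\<in>S. s \<le> 1" unfolding S_def using g(3) by (auto intro: order_trans)
        have "(1/norm v) *\<^sub>R v \<in> V" using vV assms(1) subspace_scale by blast
        moreover have "norm ((1/norm v) *\<^sub>R v) \<le> 1" using vne by simp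
        ultimately have "\<bar>g ((1/norm v) *\<^sub>R v)\<bar> \<in> S" unfolding S_def by blast
        moreover have "\<bar>g ((1/norm v) *\<^sub>R v)\<bar> = 1"
          using gv vne linear_scale[OF bounded_linear.linear[OF g(1)]] by simp
        ultimately have "1 \<in> S" by simp
        hence "Sup S = 1" using Sle by (intro antisym cSup_least[OF Sne]) (auto intro!: cSup_upper bdd_aboveI)
        thus ?thesis unfolding dual_norm_on_def S_def .
      qed
      obtain g' where g': "bounded_linear g'" "\<forall>v\<in>V. g' v = g v" "onorm g' = 1" "g' x = 1"
        using H2 blf dn by metis
      have "g' (v + x) = norm v + 1" using g' gv vV linear_add[OF bounded_linear.linear[OF g'(1)]] by simp
      hence "norm v + 1 \<le> norm (v + x)" using onorm[OF g'(1), of "v + x"] g'(3) by simp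
      moreover have "norm (v + x) \<le> norm v + 1" using norm_triangle_ineq[of v x] assms(2) by simp
      ultimately show ?thesis by simp
    qed
  qed
qed

end
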